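(* Let $\varphi$ be the morphism on $\{0,1\}^*$ with $\varphi(0)=010$ and $\varphi(1)=101$. Then $\mathbf{t}'=\varphi(\mathbf{t}_{3/2})$.
   Context: The Thue--Morse word in base $3/2$ is the unique binary sequence $\mathbf{t}_{3/2}=(t_n)_{n\ge0}$ with $t_0=0$, $t_{3n}=t_{3n+1}=t_{2n}$ and $t_{3n+2}=1-t_{2n+1}$ for all $n\ge0$ (equivalently, $t_n$ is the digit sum modulo $2$ of the base-$3/2$ expansion of $n$, where $\langle 0\rangle$ is empty and $\langle n\rangle=\langle m\rangle d$ for $2n=3m+d$, $d\in\{0,1,2\}$). Dekking's word $\mathbf{t}'=(x_n)_{n\ge0}$ is the unique binary infinite word with $x_0=0$ such that $\mathbf{t}'=\beta(x_0x_1)\beta(x_2x_3)\beta(x_4x_5)\cdots$, where $\beta(00)=\beta(01)=010$ and $\beta(10)=\beta(11)=101$. The morphism $\varphi$ is applied letter by letter to the infinite word $\mathbf{t}_{3/2}$. *)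

theory Defs
  imports Main
begin

(* Infinite binary words are modelled as functions nat => nat with values in {0,1}. *)

function tm32 :: "nat \<Rightarrow> nat" where
  "tm32 m = (if m = 0 then 0
             else if m mod 3 = 2 then 1 - tm32 (2 * (m div 3) + 1)
             else tm32 (2 * (m div 3)))"
  by auto
termination by (relation "measure id") (auto, presburger+)

definition phi :: "nat \<Rightarrow> nat list" where
  "phi a = (if a = 0 then [0,1,0] else [1,0,1])"

definition phi_word :: "(nat \<Rightarrow> nat) \<Rightarrow> (nat \<Rightarrow> nat)" where
  "phi_word w n = phi (w (n div 3)) ! (n mod 3)"

definition beta :: "nat \<Rightarrow> nat \<Rightarrow> nat list" where
  "beta a b = (if a = 0 then [0,1,0] else [1,0,1])"

(* x is a binary word with x_0 = 0 and x = beta(x0 x1) beta(x2 x3) beta(x4 x5) ... ;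
   block k of the concatenation occupies positions 3k, 3k+1, 3k+2. *)
definition dekking_prop :: "(nat \<Rightarrow> nat) \<Rightarrow> bool" where
  "dekking_prop x \<longleftrightarrow> (\<forall>n. x n \<in> {0,1}) \<and> x 0 = 0 \<and>
     (\<forall>k j. j < 3 \<longrightarrow> x (3 * k + j) = beta (x (2 * k)) (x (2 * k + 1)) ! j)"

definition dekking :: "nat \<Rightarrow> nat" where
  "dekking = (THE x. dekking_prop x)"

end

theory Submission
  imports Defs
begin

declare tm32.simps[simp del]

lemma tm32_le1: "tm32 n \<le> 1"
proof (induction n rule: less_induct)
  case (less n)
  show ?case
  proof (cases "n = 0 \<or> n mod 3 = 2")
    case True then show ?thesis by (subst tm32.simps) auto
  next
    case False
    then have "2 * (n div 3) < n" by linarith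
    then show ?thesis using False less by (subst tm32.simps) auto
  qed
qed

lemma tm32_00: "tm32 0 = 0"
  by (subst tm32.simps) simp

lemma tm32_0: "tm32 (3*m) = tm32 (2*m)"
proof (cases "m = 0")
  case True then show ?thesis by simp
next
  case False
  have a: "3*m \<noteq> 0" "(3*m) mod 3 = 0" "(3*m) div 3 = m" using False by simp_all
  show ?thesis by (subst tm32.simps) (simp only: a, simp)
qed

lemma tm32_1: "tm32 (3*m+1) = tm32 (2*m)"
proof -
  have a: "3*m+1 \<noteq> 0" "(3*m+1) mod 3 = 1" "(3*m+1) div 3 = m" by presburger+
  show ?thesis by (subst tm32.simps) (simp only: a, simp)
qed

lemma tm32_2: "tm32 (3*m+2) = 1 - tm32 (2*m+1)"
proof -
  have a: "3*m+2 \<noteq> 0" "(3*m+2) mod 3 = 2" "(3*m+2) div 3 = m" by presburger+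
  show ?thesis by (subst tm32.simps) (simp only: a, simp)
qed

lemma y_even: "phi_word tm32 (2*k) = tm32 k"
proof -
  obtain m r where k: "k = 3*m + r" "r < 3" by (metis div_mod_decomp mod_less_divisor zero_less_numeral mult.commute)
  consider "r = 0" | "r = 1" | "r = 2" using k by linarith
  then show ?thesis
  proof cases
    case 1
    have "2*k = 3*(2*m)" using k 1 by simp
    then show ?thesis using 1 k tm32_le1[of "2*m"] by (simp add: phi_word_def phi_def tm32_0)
  next
    case 2
    have e: "2*k = 3*(2*m) + 2" using k 2 by simp
    have a: "2*k div 3 = 2*m" "2*k mod 3 = 2" unfolding e by presburger+
    have "phi_word tm32 (2*k) = phi (tm32 (2*m)) ! 2" unfolding phi_word_def a ..
    also have "\<dots> = tm32 (2*m)" using tm32_le1[of "2*m"] by (simp add: phi_def)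
    also have "\<dots> = tm32 k" using k 2 tm32_1[of m] by simp
    finally show ?thesis .
  next
    case 3
    have e: "2*k = 3*(2*m+1) + 1" using k 3 by simp
    have a: "2*k div 3 = 2*m+1" "2*k mod 3 = 1" unfolding e by presburger+
    have "phi_word tm32 (2*k) = phi (tm32 (2*m+1)) ! 1" unfolding phi_word_def a ..
    also have "\<dots> = 1 - tm32 (2*m+1)" using tm32_le1[of "2*m+1"] by (simp add: phi_def)
    also have "\<dots> = tm32 k" using k 3 tm32_2[of m] by simp
    finally show ?thesis .
  qed
qed

lemma beta_phi: "beta a b = phi a"
  unfolding beta_def phi_def by (rule refl)

lemma phi_set: "set (phi a) \<subseteq> {0,1}"
  unfolding phi_def by simp

lemma exist: "dekking_prop (phi_word tm32)"
  unfolding dekking_prop_def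
proof (intro conjI allI impI)
  fix n :: nat
  have l: "length (phi a) = 3" for a unfolding phi_def by simp
  have "n mod 3 < 3" by simp
  then have "n mod 3 < length (phi (tm32 (n div 3)))" unfolding l .
  then have "phi (tm32 (n div 3)) ! (n mod 3) \<in> set (phi (tm32 (n div 3)))" by (rule nth_mem)
  then show "phi_word tm32 n \<in> {0,1}" unfolding phi_word_def using phi_set by blast
next
  show "phi_word tm32 0 = 0" unfolding phi_word_def phi_def by (simp add: tm32_00)
next
  fix k j :: nat assume j: "j < 3"
  have d: "(3*k+j) div 3 = k" "(3*k+j) mod 3 = j" using j by simp_all
  show "phi_word tm32 (3 * k + j) = beta (phi_word tm32 (2 * k)) (phi_word tm32 (2 * k + 1)) ! j"
    unfolding beta_phi y_even unfolding phi_word_def d ..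
qed

lemma dk_rule: assumes "dekking_prop x" "j < 3"
  shows "x (3*k+j) = beta (x (2*k)) (x (2*k+1)) ! j"
proof -
  have "\<forall>k j. j < 3 \<longrightarrow> x (3 * k + j) = beta (x (2 * k)) (x (2 * k + 1)) ! j"
    using assms(1) unfolding dekking_prop_def by (elim conjE)
  then show ?thesis using assms(2) by blast
qed

lemma dk0: assumes "dekking_prop x" shows "x 0 = 0"
  using assms unfolding dekking_prop_def by (elim conjE)

lemma uniq: assumes "dekking_prop x" "dekking_prop y" shows "x n = y n"
proof (induction n rule: less_induct)
  case (less n)
  define k where "k = n div 3"
  define j where "j = n mod 3"
  have n: "n = 3*k+j" "j < 3" unfolding k_def j_def by simp_all
  have ex: "x n = beta (x (2*k)) (x (2*k+1)) ! j" "y n = beta (y (2*k)) (y (2*k+1)) ! j"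
    unfolding n(1) using dk_rule[OF assms(1) n(2)] dk_rule[OF assms(2) n(2)] by blast+
  show ?case
  proof (cases "k = 0")
    case True
    have "x 0 = 0" "y 0 = 0" using dk0 assms by blast+
    then show ?thesis using ex True by (simp add: beta_def)
  next
    case False
    then have "2*k < n" using n by linarith
    then have "x (2*k) = y (2*k)" using less by blast
    then show ?thesis using ex by (simp add: beta_def)
  qed
qed

theorem lemma4:
  shows "dekking = phi_word tm32"
proof -
  have "(THE x. dekking_prop x) = phi_word tm32"
  proof (rule the_equality)
    show "dekking_prop (phi_word tm32)" by (rule exist)
    fix x assume "dekking_prop x"
    then show "x = phi_word tm32" using exist by (intro ext uniq)
  qed
  then show ?thesis by (simp add: dekking_def)
qed

end
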